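(* Let $\mathcal{T}$ be a finite tree, $w:V(\mathcal{T})\to\mathbb{R}_{\ge0}$, and let $C$ be a centroid tree of $(\mathcal{T},w)$. For every $\varepsilon>0$ there is a weight function $w':V(\mathcal{T})\to\mathbb{R}_{\ge0}$ with $\|w'-w\|_\infty<\varepsilon$ such that $C$ is the unique centroid tree of $(\mathcal{T},w')$.
   Context: For a subgraph $\mathcal{H}$, $w(\mathcal{H})=\sum_{x\in V(\mathcal{H})}w(x)$. A search tree on a tree $\mathcal{T}$ is a rooted tree $T$ with vertex set $V(\mathcal{T})$ defined recursively: its root is an arbitrary vertex $r$, and the children of $r$ are the roots of search trees built on the connected components of $\mathcal{T}-r$; a single-vertex tree has only itself as search tree. A vertex $v$ is a centroid of $(\mathcal{T},w)$ if each component $\mathcal{H}$ of $\mathcal{T}-v$ has $w(\mathcal{H})\le w(\mathcal{T})/2$. A search tree $T$ is a centroid tree if each vertex $x$ is a centroid of $(\mathcal{T}[V(T_x)],w)$, $T_x$ being the subtree of $T$ rooted at $x$. *)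

theory Defs
  imports Complex_Main "HOL-Library.FSet"
begin

definition edges_in :: "('a \<Rightarrow> 'a \<Rightarrow> bool) \<Rightarrow> 'a set \<Rightarrow> ('a \<times> 'a) set" where
  "edges_in E S = {(x, y). x \<in> S \<and> y \<in> S \<and> E x y}"

definition comps :: "('a \<Rightarrow> 'a \<Rightarrow> bool) \<Rightarrow> 'a set \<Rightarrow> 'a set set" where
  "comps E S = {{y \<in> S. (x, y) \<in> (edges_in E S)\<^sup>*} | x. x \<in> S}"

definition connected_on :: "('a \<Rightarrow> 'a \<Rightarrow> bool) \<Rightarrow> 'a set \<Rightarrow> bool" where
  "connected_on E S \<longleftrightarrow> (\<forall>x\<in>S. \<forall>y\<in>S. (x, y) \<in> (edges_in E S)\<^sup>*)"

text \<open>A finite tree: finite nonempty vertex set, simple undirected graph, connected,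
  and acyclic (every edge is a bridge: removing it disconnects its endpoints).\<close>
definition is_tree :: "'a set \<Rightarrow> ('a \<Rightarrow> 'a \<Rightarrow> bool) \<Rightarrow> bool" where
  "is_tree V E \<longleftrightarrow> finite V \<and> V \<noteq> {} \<and>
     (\<forall>x y. E x y \<longrightarrow> x \<in> V \<and> y \<in> V \<and> x \<noteq> y \<and> E y x) \<and>
     connected_on E V \<and>
     (\<forall>x y. E x y \<longrightarrow>
        (x, y) \<notin> (edges_in E V - {(x, y), (y, x)})\<^sup>*)"

datatype 'a rtree = Node 'a "'a rtree fset"

primrec verts :: "'a rtree \<Rightarrow> 'a set" where
  "verts (Node r ts) = insert r (\<Union> (fset (fimage verts ts)))"

primrec root :: "'a rtree \<Rightarrow> 'a" where
  "root (Node r ts) = r"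

inductive search_tree :: "('a \<Rightarrow> 'a \<Rightarrow> bool) \<Rightarrow> 'a set \<Rightarrow> 'a rtree \<Rightarrow> bool"
  for E where
  "\<lbrakk> r \<in> S;
     verts ` fset ts = comps E (S - {r});
     inj_on verts (fset ts);
     \<forall>t\<in>fset ts. search_tree E (verts t) t \<rbrakk>
   \<Longrightarrow> search_tree E S (Node r ts)"

definition is_centroid :: "('a \<Rightarrow> 'a \<Rightarrow> bool) \<Rightarrow> ('a \<Rightarrow> real) \<Rightarrow> 'a set \<Rightarrow> 'a \<Rightarrow> bool" where
  "is_centroid E w S v \<longleftrightarrow> v \<in> S \<and>
     (\<forall>H\<in>comps E (S - {v}). sum w H \<le> sum w S / 2)"

inductive all_centroids :: "('a \<Rightarrow> 'a \<Rightarrow> bool) \<Rightarrow> ('a \<Rightarrow> real) \<Rightarrow> 'a rtree \<Rightarrow> bool"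
  for E w where
  "\<lbrakk> is_centroid E w (verts (Node r ts)) r;
     \<forall>t\<in>fset ts. all_centroids E w t \<rbrakk>
   \<Longrightarrow> all_centroids E w (Node r ts)"

definition centroid_tree :: "'a set \<Rightarrow> ('a \<Rightarrow> 'a \<Rightarrow> bool) \<Rightarrow> ('a \<Rightarrow> real) \<Rightarrow> 'a rtree \<Rightarrow> bool" where
  "centroid_tree V E w C \<longleftrightarrow> search_tree E V C \<and> all_centroids E w C"

end

theory Submission
  imports Defs
begin

lemma edges_in_mono: "A \<subseteq> B \<Longrightarrow> edges_in E A \<subseteq> edges_in E B"
  by (auto simp: edges_in_def)

lemma rt_mono: "(x,y) \<in> (edges_in E A)\<^sup>* \<Longrightarrow> A \<subseteq> B \<Longrightarrow> (x,y) \<in> (edges_in E B)\<^sup>*"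
  using rtrancl_mono[OF edges_in_mono] by blast

lemma rt_sym:
  assumes SYM: "\<forall>x y. E x y \<longrightarrow> E y x"
  shows "(x,y) \<in> (edges_in E A)\<^sup>* \<Longrightarrow> (y,x) \<in> (edges_in E A)\<^sup>*"
proof (induct rule: rtrancl_induct)
  case base then show ?case by simp
next
  case (step b c)
  then have "(c,b) \<in> edges_in E A" using SYM by (auto simp: edges_in_def)
  then show ?case using step(3) by (rule converse_rtrancl_into_rtrancl)
qed

lemma rt_in: "(x,y) \<in> (edges_in E A)\<^sup>* \<Longrightarrow> x \<in> A \<Longrightarrow> y \<in> A"
  by (induct rule: rtrancl_induct) (auto simp: edges_in_def)

lemma rt_restrict:
  assumes "(a,b) \<in> (edges_in E A)\<^sup>*" "a \<in> A" "{y\<in>A. (a,y) \<in> (edges_in E A)\<^sup>*} \<subseteq> B"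
  shows "(a,b) \<in> (edges_in E (A \<inter> B))\<^sup>*"
  using assms(1)
proof (induct rule: rtrancl_induct)
  case base then show ?case by simp
next
  case (step b c)
  have "c \<in> A" "b \<in> A" using step(2) by (auto simp: edges_in_def)
  moreover have "(a,c) \<in> (edges_in E A)\<^sup>*" using step(1,2) by simp
  ultimately have "b \<in> B" "c \<in> B" using assms(3) step(1) by auto
  with step \<open>c \<in> A\<close> \<open>b \<in> A\<close> have "(b,c) \<in> edges_in E (A \<inter> B)" by (auto simp: edges_in_def)
  then show ?case using step(3) by simp
qed

lemma comps_sub: "H \<in> comps E A \<Longrightarrow> H \<subseteq> A"
  by (auto simp: comps_def)

lemma Union_comps: "\<Union> (comps E A) = A"
  by (auto simp: comps_def)

lemma comps_disj:
  assumes SYM: "\<forall>x y. E x y \<longrightarrow> E y x"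
  and "H1 \<in> comps E A" "H2 \<in> comps E A" "z \<in> H1" "z \<in> H2"
  shows "H1 = H2"
proof -
  obtain a where a: "a \<in> A" "H1 = {y\<in>A. (a,y) \<in> (edges_in E A)\<^sup>*}" using assms(2) by (auto simp: comps_def)
  obtain b where b: "b \<in> A" "H2 = {y\<in>A. (b,y) \<in> (edges_in E A)\<^sup>*}" using assms(3) by (auto simp: comps_def)
  have "(a,z) \<in> (edges_in E A)\<^sup>*" "(b,z) \<in> (edges_in E A)\<^sup>*" using a b assms(4,5) by auto
  then have ab: "(a,b) \<in> (edges_in E A)\<^sup>*" "(b,a) \<in> (edges_in E A)\<^sup>*"
    using rt_sym[OF SYM] by (meson rtrancl_trans)+
  show ?thesis using a b ab by (auto intro: rtrancl_trans)
qed

lemma comps_conn: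
  assumes SYM: "\<forall>x y. E x y \<longrightarrow> E y x"
  and "H \<in> comps E A"
  shows "connected_on E H"
proof -
  obtain a where a: "a \<in> A" "H = {y\<in>A. (a,y) \<in> (edges_in E A)\<^sup>*}" using assms(2) by (auto simp: comps_def)
  have "(a,y) \<in> (edges_in E H)\<^sup>*" if "y \<in> H" for y
  proof -
    have "(a,y) \<in> (edges_in E (A \<inter> H))\<^sup>*" using rt_restrict[of a y E A H] a that by auto
    moreover have "A \<inter> H = H" using a by auto
    ultimately show ?thesis by simp
  qed
  then show ?thesis unfolding connected_on_def using rt_sym[OF SYM] by (meson rtrancl_trans)
qed

lemma first_hit:
  assumes "(a,b) \<in> (edges_in E S)\<^sup>*" "a \<in> S - {r}"
  shows "(a,b) \<in> (edges_in E (S-{r}))\<^sup>* \<or> (\<exists>u. (a,u) \<in> (edges_in E (S-{r}))\<^sup>* \<and> (u,r) \<in> edges_in E S)"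
  using assms(1)
proof (induct rule: rtrancl_induct)
  case base then show ?case by simp
next
  case (step b c)
  show ?case
  proof (cases "(a,b) \<in> (edges_in E (S-{r}))\<^sup>*")
    case True
    note ab = True
    then have bS: "b \<in> S - {r}" using rt_in assms(2) by metis
    show ?thesis
    proof (cases "c = r")
      case True then show ?thesis using step(2) ab by blast
    next
      case False
      then have "(b,c) \<in> edges_in E (S-{r})" using step(2) bS by (auto simp: edges_in_def)
      then show ?thesis using ab by auto
    qed
  next
    case False then show ?thesis using step(3) by blast
  qed
qed

lemma centroid_unique:
  assumes SYM: "\<forall>x y. E x y \<longrightarrow> E y x"
  and fin: "finite S" and conn: "connected_on E S" and nn: "\<forall>v\<in>S. W v \<ge> 0"
  and rS: "r \<in> S" and strict: "\<forall>H\<in>comps E (S-{r}). sum W H < sum W S / 2"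
  and cen: "is_centroid E W S r'"
  shows "r' = r"
proof (rule ccontr)
  assume ne: "r' \<noteq> r"
  have r'S: "r' \<in> S" using cen by (simp add: is_centroid_def)
  define A where "A = S - {r}"
  define H where "H = {y\<in>A. (r',y) \<in> (edges_in E A)\<^sup>*}"
  define K where "K = {y\<in>S-{r'}. (r,y) \<in> (edges_in E (S-{r'}))\<^sup>*}"
  have HC: "H \<in> comps E A" using r'S ne unfolding H_def comps_def A_def by blast
  have KC: "K \<in> comps E (S-{r'})" using rS ne unfolding K_def comps_def by blast
  have HS: "H \<subseteq> S" using H_def A_def by auto
  have KS: "K \<subseteq> S" using K_def by auto
  have sub: "S - H \<subseteq> K"
  proof
    fix y assume y: "y \<in> S - H"
    have yr': "y \<noteq> r'" using y r'S ne unfolding H_def A_def by auto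
    show "y \<in> K"
    proof (cases "y = r")
      case True then show ?thesis using rS ne unfolding K_def by auto
    next
      case False
      then have yA: "y \<in> A" using y A_def by auto
      have "(y,r) \<in> (edges_in E S)\<^sup>*" using conn y rS unfolding connected_on_def by auto
      from first_hit[OF this] yA A_def
      have "(y,r) \<in> (edges_in E A)\<^sup>* \<or> (\<exists>u. (y,u) \<in> (edges_in E A)\<^sup>* \<and> (u,r) \<in> edges_in E S)" by auto
      moreover have "(y,r) \<notin> (edges_in E A)\<^sup>*" using rt_in[of y r E A] yA A_def by auto
      ultimately obtain u where u: "(y,u) \<in> (edges_in E A)\<^sup>*" "(u,r) \<in> edges_in E S" by blast
      have cl: "{z\<in>A. (y,z) \<in> (edges_in E A)\<^sup>*} \<subseteq> S - {r'}"
      proof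
        fix z assume z: "z \<in> {z\<in>A. (y,z) \<in> (edges_in E A)\<^sup>*}"
        show "z \<in> S - {r'}"
        proof (rule ccontr)
          assume "z \<notin> S - {r'}"
          then have "z = r'" using z A_def by auto
          then have "(r',y) \<in> (edges_in E A)\<^sup>*" using z rt_sym[OF SYM] by auto
          then have "y \<in> H" using yA H_def by auto
          then show False using y by auto
        qed
      qed
      have "(y,u) \<in> (edges_in E (A \<inter> (S - {r'})))\<^sup>*" using rt_restrict[OF u(1) yA cl] .
      then have yu: "(y,u) \<in> (edges_in E (S - {r'}))\<^sup>*" by (rule rt_mono) auto
      have "u \<in> A \<inter> (S - {r'})" using rt_in[OF \<open>(y,u) \<in> (edges_in E (A \<inter> (S - {r'})))\<^sup>*\<close>] yA y yr' A_def by auto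
      then have "(u,r) \<in> edges_in E (S - {r'})" using u(2) ne rS by (auto simp: edges_in_def)
      with yu have "(y,r) \<in> (edges_in E (S - {r'}))\<^sup>*" by simp
      then have "(r,y) \<in> (edges_in E (S - {r'}))\<^sup>*" using rt_sym[OF SYM] by auto
      then show ?thesis using y yr' K_def by auto
    qed
  qed
  have "sum W K \<le> sum W S / 2" using cen KC by (auto simp: is_centroid_def)
  moreover have "sum W (S - H) \<le> sum W K"
    using sub KS fin nn by (intro sum_mono2) (auto intro: finite_subset)
  moreover have "sum W S = sum W H + sum W (S - H)"
    using HS fin by (metis add.commute sum.subset_diff)
  moreover have "sum W H < sum W S / 2" using strict HC A_def by auto
  ultimately show False by linarith
qed


lemma search_verts: "search_tree E S t \<Longrightarrow> verts t = S"
proof (induct rule: search_tree.induct)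
  case (1 r S ts)
  have "verts (Node r ts) = insert r (\<Union> (verts ` fset ts))" by simp
  also have "\<dots> = insert r (\<Union> (comps E (S - {r})))" using 1(2) by simp
  also have "\<dots> = S" using Union_comps[of E "S - {r}"] 1(1) by auto
  finally show ?case .
qed

primrec gf :: "real \<Rightarrow> 'a rtree \<Rightarrow> real \<Rightarrow> 'a \<Rightarrow> real" where
 "gf q (Node r ts) c v = (if v = r then c else Max (insert 0 (fset ((\<lambda>t. gf q t (c*q) v) |`| ts))))"

lemma gf_bounds: "0 \<le> c \<Longrightarrow> 0 \<le> q \<Longrightarrow> q \<le> 1 \<Longrightarrow> 0 \<le> gf q t c v \<and> gf q t c v \<le> c"
proof (induct t arbitrary: c)
  case (Node r ts)
  have cq: "0 \<le> c*q" "c*q \<le> c" using Node.prems by (auto simp: mult_left_le)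
  have "\<forall>x \<in> fset ((\<lambda>t. gf q t (c*q) v) |`| ts). 0 \<le> x \<and> x \<le> c"
    using Node.hyps[OF _ cq(1) Node.prems(2,3)] cq(2) by force
  then show ?case using Node.prems by (auto simp: Max_ge_iff)
qed

lemma gf_out: "v \<notin> verts t \<Longrightarrow> gf q t c v = 0"
proof (induct t arbitrary: c)
  case (Node r ts)
  have "fset ((\<lambda>t. gf q t (c*q) v) |`| ts) \<subseteq> {0}"
    using Node by force
  then have "Max (insert 0 (fset ((\<lambda>t. gf q t (c*q) v) |`| ts))) = 0"
    by (intro Max_eqI) auto
  then show ?case using Node.prems by simp
qed

lemma gf_child:
  assumes SYM: "\<forall>x y. E x y \<longrightarrow> E y x"
  and st: "search_tree E S (Node r ts)" and t: "t \<in> fset ts" and v: "v \<in> verts t"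
  and c: "0 \<le> c" and q: "0 \<le> q" "q \<le> 1"
  shows "gf q (Node r ts) c v = gf q t (c*q) v"
proof -
  from st have cm: "verts ` fset ts = comps E (S - {r})" and inj: "inj_on verts (fset ts)"
    by (auto elim: search_tree.cases)
  have tc: "verts t \<in> comps E (S - {r})" using cm t by auto
  then have "v \<noteq> r" using comps_sub v by fastforce
  have other: "gf q t' (c*q) v = 0" if "t' \<in> fset ts" "t' \<noteq> t" for t'
  proof (rule gf_out, rule notI)
    assume "v \<in> verts t'"
    moreover have "verts t' \<in> comps E (S - {r})" using cm that by auto
    ultimately have "verts t' = verts t" using comps_disj[OF SYM _ tc] v by blast
    then show False using inj that t by (auto dest: inj_onD)
  qed
  define x where "x = gf q t (c*q) v"
  have x0: "0 \<le> x" using gf_bounds[of "c*q" q t v] c q unfolding x_def by auto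
  have sub: "fset ((\<lambda>t. gf q t (c*q) v) |`| ts) \<subseteq> {0, x}" using other x_def
    by auto
  have xin: "x \<in> fset ((\<lambda>t. gf q t (c*q) v) |`| ts)" using t x_def by auto
  have "Max (insert 0 (fset ((\<lambda>t. gf q t (c*q) v) |`| ts))) = x"
    by (rule Max_eqI) (use sub xin x0 in auto)
  then show ?thesis using \<open>v \<noteq> r\<close> x_def by simp
qed


inductive strict_all :: "('a \<Rightarrow> 'a \<Rightarrow> bool) \<Rightarrow> ('a \<Rightarrow> real) \<Rightarrow> 'a rtree \<Rightarrow> bool"
  for E W where
  "\<lbrakk> \<forall>H\<in>comps E (verts (Node r ts) - {r}). sum W H < sum W (verts (Node r ts)) / 2;
     \<forall>t\<in>fset ts. strict_all E W t \<rbrakk>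
   \<Longrightarrow> strict_all E W (Node r ts)"

lemma strict_cong: "strict_all E W1 t \<Longrightarrow> \<forall>v\<in>verts t. W1 v = W2 v \<Longrightarrow> strict_all E W2 t"
proof (induct rule: strict_all.induct)
  case (1 r ts)
  have "sum W2 H = sum W1 H" if "H \<in> comps E (verts (Node r ts) - {r})" for H
    using comps_sub[OF that] 1(3) by (intro sum.cong) auto
  moreover have "sum W2 (verts (Node r ts)) = sum W1 (verts (Node r ts))"
    using 1(3) by (intro sum.cong) auto
  moreover have "\<forall>t\<in>fset ts. strict_all E W2 t" using 1(2,3) by auto
  ultimately show ?case using 1(1) by (intro strict_all.intros) auto
qed

lemma strict_all_centroids: "strict_all E W t \<Longrightarrow> all_centroids E W t"
proof (induct rule: strict_all.induct)
  case (1 r ts)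
  have "is_centroid E W (verts (Node r ts)) r"
    unfolding is_centroid_def using 1(1) by (auto intro: less_imp_le)
  then show ?case using 1(2) by (intro all_centroids.intros) auto
qed

lemma lemmaA:
  assumes SYM: "\<forall>x y. E x y \<longrightarrow> E y x"
  shows "search_tree E S t \<Longrightarrow> all_centroids E w t \<Longrightarrow> finite S \<Longrightarrow> card S \<le> N \<Longrightarrow> 0 < \<delta>
    \<Longrightarrow> 0 < c \<Longrightarrow> q = 1 / (2 * real N) \<Longrightarrow> 1 \<le> N
    \<Longrightarrow> strict_all E (\<lambda>v. w v + \<delta> * gf q t c v) t"
proof (induct arbitrary: c rule: search_tree.induct)
  case (1 r S ts)
  have st: "search_tree E S (Node r ts)" by (rule search_tree.intros) (use 1(1-4) in auto)
  have d0: "0 < \<delta>" and c0: "0 < c" and qd: "q = 1 / (2 * real N)" and N1: "1 \<le> N"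
    using 1(8-11) by auto
  have q: "0 \<le> q" "q \<le> 1" using qd N1 by auto
  have vS: "verts (Node r ts) = S" using search_verts[OF st] .
  define G where "G = gf q (Node r ts) c"
  define W where "W = (\<lambda>v. w v + \<delta> * G v)"
  from 1(5) have cen: "is_centroid E w S r" and ch: "\<forall>t\<in>fset ts. all_centroids E w t"
    using vS by (auto elim: all_centroids.cases)
  have G0: "0 \<le> G v" for v using gf_bounds[of c q] q 1 G_def by auto
  have Gr: "G r = c" using G_def by simp
  have root: "sum W H < sum W S / 2" if H: "H \<in> comps E (S - {r})" for H
  proof -
    obtain t where t: "t \<in> fset ts" "H = verts t" using H 1(2) by auto
    have HS: "H \<subseteq> S - {r}" using comps_sub[OF H] .
    have finH: "finite H" using HS 1(6) finite_subset by blast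
    have gc: "G v = gf q t (c*q) v" if "v \<in> verts t" for v
      unfolding G_def by (rule gf_child[OF SYM st t(1) that _ q]) (use c0 in simp)
    have "sum G H = sum (gf q t (c*q)) H"
      using gc t by (intro sum.cong) auto
    also have "\<dots> \<le> sum (\<lambda>_. c*q) H"
      using gf_bounds[of "c*q" q t] q c0 by (intro sum_mono) (simp add: mult_nonneg_nonneg)
    also have "\<dots> = card H * (c*q)" by simp
    also have "\<dots> \<le> N * (c*q)"
    proof -
      have "card H \<le> card S" using card_mono[OF 1(6), of H] HS by blast
      then show ?thesis using 1(7) q c0 by (intro mult_right_mono) auto
    qed
    also have "\<dots> = c/2" using qd N1 by (simp add: field_simps)
    finally have GH: "sum G H < c" using c0 by linarith
    have "sum G (S - H) \<ge> G r" using 1(1,6) HS G0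
      by (intro member_le_sum) (auto)
    then have GSH: "sum G H < sum G (S - H)" using GH Gr by linarith
    have wH: "sum w H \<le> sum w S / 2" using cen H by (auto simp: is_centroid_def)
    have splitw: "sum w S = sum w H + sum w (S - H)" using HS 1(6)
      by (metis add.commute sum.subset_diff Diff_subset subset_trans)
    have splitW: "sum W S = sum W H + sum W (S - H)" using HS 1(6)
      by (metis add.commute sum.subset_diff Diff_subset subset_trans)
    have "sum W H = sum w H + \<delta> * sum G H" by (simp add: W_def sum.distrib sum_distrib_left)
    moreover have "sum W (S - H) = sum w (S - H) + \<delta> * sum G (S - H)"
      by (simp add: W_def sum.distrib sum_distrib_left)
    moreover have "\<delta> * sum G H < \<delta> * sum G (S - H)" using GSH d0 by simp
    ultimately have "sum W H < sum W (S - H)" using wH splitw by linarith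
    then show ?thesis using splitW by linarith
  qed
  have kids: "strict_all E W t" if t: "t \<in> fset ts" for t
  proof -
    have tc: "verts t \<in> comps E (S - {r})" using 1(2) t by auto
    have sub: "verts t \<subseteq> S" using comps_sub[OF tc] by auto
    have "strict_all E (\<lambda>v. w v + \<delta> * gf q t (c*q) v) t"
      using 1(4) t ch 1(6-11) finite_subset[OF sub] card_mono[OF 1(6) sub] q
      by (auto intro!: mult_pos_pos)
    moreover have gc: "G v = gf q t (c*q) v" if "v \<in> verts t" for v
      unfolding G_def by (rule gf_child[OF SYM st t that _ q]) (use c0 in simp)
    ultimately show ?thesis
      by (intro strict_cong[of E "\<lambda>v. w v + \<delta> * gf q t (c*q) v" t W]) (simp_all add: W_def gc)
  qed
  show ?case using root kids vS unfolding W_def G_def by (intro strict_all.intros) auto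
qed


lemma lemmaB:
  assumes SYM: "\<forall>x y. E x y \<longrightarrow> E y x"
  shows "search_tree E S t \<Longrightarrow> finite S \<Longrightarrow> connected_on E S \<Longrightarrow> \<forall>v\<in>S. W v \<ge> 0
    \<Longrightarrow> strict_all E W t \<Longrightarrow> search_tree E S C' \<Longrightarrow> all_centroids E W C' \<Longrightarrow> C' = t"
proof (induct arbitrary: C' rule: search_tree.induct)
  case (1 r S ts)
  have st: "search_tree E S (Node r ts)" by (rule search_tree.intros) (use 1(1-4) in auto)
  have vS: "verts (Node r ts) = S" using search_verts[OF st] .
  from 1(9) obtain r' ts' where C': "C' = Node r' ts'" "r' \<in> S"
    "verts ` fset ts' = comps E (S - {r'})" "inj_on verts (fset ts')"
    "\<forall>t\<in>fset ts'. search_tree E (verts t) t"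
    by (auto elim: search_tree.cases)
  have vS': "verts C' = S" using search_verts[OF 1(9)] .
  from 1(10) have cen: "is_centroid E W S r'" and ch': "\<forall>t\<in>fset ts'. all_centroids E W t"
    using vS' C'(1) by (auto elim: all_centroids.cases)
  from 1(8) have strict: "\<forall>H\<in>comps E (S - {r}). sum W H < sum W S / 2"
    and ch: "\<forall>t\<in>fset ts. strict_all E W t"
    using vS by (auto elim: strict_all.cases)
  have rr: "r' = r" using centroid_unique[OF SYM 1(5,6,7) 1(1) strict cen] .
  have match: "t' = t" if "t \<in> fset ts" "t' \<in> fset ts'" "verts t' = verts t" for t t'
  proof -
    have tc: "verts t \<in> comps E (S - {r})" using 1(2) that by auto
    have sub: "verts t \<subseteq> S" using comps_sub[OF tc] by auto
    have IH: "search_tree E (verts t) t' \<Longrightarrow> all_centroids E W t' \<Longrightarrow> t' = t"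
      using 1(4) that(1) finite_subset[OF sub 1(5)] comps_conn[OF SYM tc] sub 1(7) ch
      by blast
    show ?thesis using IH C'(5) ch' that by auto
  qed
  have "fset ts' \<subseteq> fset ts"
  proof
    fix t' assume t': "t' \<in> fset ts'"
    then have "verts t' \<in> comps E (S - {r})" using C'(3) rr by auto
    then have "verts t' \<in> verts ` fset ts" using 1(2) by simp
    then obtain t where "t \<in> fset ts" "verts t = verts t'" by (metis imageE)
    then show "t' \<in> fset ts" using match t' by metis
  qed
  moreover have "fset ts \<subseteq> fset ts'"
  proof
    fix t assume t: "t \<in> fset ts"
    then have "verts t \<in> comps E (S - {r'})" using 1(2) rr by auto
    then have "verts t \<in> verts ` fset ts'" using C'(3) by simp
    then obtain t' where "t' \<in> fset ts'" "verts t' = verts t" by (metis imageE)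
    then show "t \<in> fset ts'" using match t by metis
  qed
  ultimately have "ts' = ts" by (simp add: fset_inject)
  then show ?case using C'(1) rr by simp
qed

theorem mainTheorem18:
  fixes V :: "'a set" and E :: "'a \<Rightarrow> 'a \<Rightarrow> bool" and w :: "'a \<Rightarrow> real"
    and C :: "'a rtree" and \<epsilon> :: real
  assumes "is_tree V E"
    and "\<forall>x\<in>V. w x \<ge> 0"
    and "centroid_tree V E w C"
    and "\<epsilon> > 0"
  shows "\<exists>w' :: 'a \<Rightarrow> real. (\<forall>x\<in>V. w' x \<ge> 0) \<and> (\<forall>x\<in>V. \<bar>w' x - w x\<bar> < \<epsilon>) \<and>
           centroid_tree V E w' C \<and> (\<forall>C'. centroid_tree V E w' C' \<longrightarrow> C' = C)"
proof -
  have fin: "finite V" and ne: "V \<noteq> {}" and SYM: "\<forall>x y. E x y \<longrightarrow> E y x"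
    and conn: "connected_on E V"
    using assms(1) unfolding is_tree_def by blast+
  have st: "search_tree E V C" and ac: "all_centroids E w C"
    using assms(3) unfolding centroid_tree_def by auto
  define N where "N = card V"
  have N1: "1 \<le> N" using fin ne N_def by (simp add: Suc_le_eq card_gt_0_iff)
  define q where "q = 1 / (2 * real N)"
  have q: "0 \<le> q" "q \<le> 1" using N1 q_def by auto
  define \<delta> where "\<delta> = \<epsilon> / 2"
  have d0: "0 < \<delta>" using assms(4) \<delta>_def by simp
  define w' where "w' = (\<lambda>v. w v + \<delta> * gf q C 1 v)"
  have gb: "0 \<le> gf q C 1 v \<and> gf q C 1 v \<le> 1" for v using gf_bounds[of 1 q C v] q by simp
  have sa: "strict_all E w' C"
    unfolding w'_def using lemmaA[OF SYM st ac fin _ d0 _ q_def N1] N_def by simp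
  have nn: "\<forall>x\<in>V. w' x \<ge> 0" using assms(2) gb d0 unfolding w'_def
    by (simp add: add_nonneg_nonneg)
  have cl: "\<forall>x\<in>V. \<bar>w' x - w x\<bar> < \<epsilon>"
  proof
    fix x assume "x \<in> V"
    have "\<delta> * gf q C 1 x \<le> \<delta>" using gb[of x] d0 by (simp add: mult_left_le)
    moreover have "0 \<le> \<delta> * gf q C 1 x" using gb[of x] d0 by simp
    ultimately show "\<bar>w' x - w x\<bar> < \<epsilon>" unfolding w'_def \<delta>_def using assms(4) by simp
  qed
  have ct: "centroid_tree V E w' C"
    unfolding centroid_tree_def using st strict_all_centroids[OF sa] by simp
  have un: "\<forall>C'. centroid_tree V E w' C' \<longrightarrow> C' = C"
    using lemmaB[OF SYM st fin conn nn sa] unfolding centroid_tree_def by blast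
  show ?thesis using nn cl ct un by blast
qed

end
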